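(* Let $r\ge2$, $\alpha_1,\dots,\alpha_r>0$, $m>1$, $f(z)=\mathrm{sgn}(z)\frac{|z|^m}{1+|z|^m}$, and let $\Phi_t$ be the flow of $\dot x_1=f(x_r)-\alpha_1x_1$, $\dot x_j=x_{j-1}-\alpha_jx_j$ ($2\le j\le r$). Then the Jacobian $\frac{\partial\Phi_t}{\partial x}(x)$ has all entries strictly positive for every $x\neq0$ and every $t>0$, and the flow is strongly monotone: $x<y$ implies $\Phi_t(x)\ll\Phi_t(y)$ for all $t>0$.
   Context: Order on $\mathbb{R}^r$: $x\le y$ iff $x_i\le y_i$ for all $i$; $x<y$ iff $x\le y$ and $x\ne y$; $x\ll y$ iff $x_i<y_i$ for all $i$. Note that the Jacobian of the vector field fails to be irreducible on the hyperplane $\{x_r=0\}$ when $m>1$. *)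

theory Defs
  imports "HOL-Analysis.Analysis"
begin

text \<open>Coordinates of a vector in \<open>real^'n\<close> are labelled x_1..x_r via an enumeration
  \<open>e :: nat \<Rightarrow> 'n\<close>, bijective from {0..<r} (r = CARD('n)); paper index j corresponds to e (j-1).\<close>

definition hill :: "real \<Rightarrow> real \<Rightarrow> real" where
  "hill m z = sgn z * (\<bar>z\<bar> powr m / (1 + \<bar>z\<bar> powr m))"

definition cyc_field :: "real \<Rightarrow> (nat \<Rightarrow> real) \<Rightarrow> (nat \<Rightarrow> 'n::finite) \<Rightarrow> real^'n \<Rightarrow> real^'n" where
  "cyc_field m \<alpha> e x = (\<chi> i.
     (let k = inv_into {..<CARD('n)} e i in
      if k = 0 then hill m (x $ e (CARD('n) - 1)) - \<alpha> 0 * x $ i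
      else x $ e (k - 1) - \<alpha> k * x $ i))"

definition vle :: "real^'n \<Rightarrow> real^'n \<Rightarrow> bool" where
  "vle x y \<longleftrightarrow> (\<forall>i. x $ i \<le> y $ i)"

definition vlt :: "real^'n \<Rightarrow> real^'n \<Rightarrow> bool" where
  "vlt x y \<longleftrightarrow> vle x y \<and> x \<noteq> y"

definition vll :: "real^'n \<Rightarrow> real^'n \<Rightarrow> bool" where
  "vll x y \<longleftrightarrow> (\<forall>i. x $ i < y $ i)"

end

theory Submission
  imports Defs
begin


definition hd :: "real \<Rightarrow> real \<Rightarrow> real" where
  "hd m z = m * \<bar>z\<bar> powr (m - 1) / (1 + \<bar>z\<bar> powr m)^2"

lemma den_pos[simp]: "1 + \<bar>z::real\<bar> powr (m::real) > 0"
  using powr_ge_zero[of "\<bar>z\<bar>" m] by linarith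

lemma hill_pos: "z > 0 \<Longrightarrow> hill m z = z powr m / (1 + z powr m)"
  by (simp add: hill_def)
lemma hill_neg: "z < 0 \<Longrightarrow> hill m z = - ((-z) powr m / (1 + (-z) powr m))"
  by (simp add: hill_def)
lemma hill_0[simp]: "hill m 0 = 0"
  by (simp add: hill_def)

lemma g_deriv:
  assumes "y > 0"
  shows "((\<lambda>y. y powr m / (1 + y powr m)) has_real_derivative
           m * y powr (m - 1) / (1 + y powr m)^2) (at y)"
proof -
  have p: "y powr m > 0" using assms by simp
  have p2: "1 + y powr m \<noteq> 0" using p by linarith
  have "((\<lambda>y. y powr m / (1 + y powr m)) has_real_derivative
     ((m * y powr (m - 1)) * (1 + y powr m) - y powr m * (m * y powr (m - 1))) / (1 + y powr m)^2) (at y)"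
    using assms p p2
    by (auto intro!: derivative_eq_intros simp: power2_eq_square)
  moreover have "((m * y powr (m - 1)) * (1 + y powr m) - y powr m * (m * y powr (m - 1))) / (1 + y powr m)^2
     = m * y powr (m - 1) / (1 + y powr m)^2"
    by (simp add: algebra_simps)
  ultimately show ?thesis by simp
qed

lemma hill_deriv:
  assumes m: "m > 1"
  shows "(hill m has_real_derivative hd m z) (at z)"
proof -
  consider "z > 0" | "z < 0" | "z = 0" by linarith
  then show ?thesis
  proof cases
    case 1
    show ?thesis
      apply (rule has_field_derivative_transform_within_open[of "\<lambda>y. y powr m / (1 + y powr m)" _ _ "{0<..}"])
      using g_deriv[OF 1, of m] 1 by (auto simp: hd_def hill_pos)
  next
    case 2
    have A: "((\<lambda>y. y powr m / (1 + y powr m)) has_real_derivative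
           m * (-z) powr (m - 1) / (1 + (-z) powr m)^2) (at (-z))"
      using g_deriv[of "-z" m] 2 by simp
    have B: "(uminus has_real_derivative -1) (at z)"
      by (auto intro!: derivative_eq_intros)
    have "((\<lambda>y. - ((-y) powr m / (1 + (-y) powr m))) has_real_derivative
           - (m * (-z) powr (m - 1) / (1 + (-z) powr m)^2 * (-1))) (at z)"
      using DERIV_minus[OF DERIV_chain2[OF A B]] by simp
    then have d: "((\<lambda>y. - ((-y) powr m / (1 + (-y) powr m))) has_real_derivative hd m z) (at z)"
      using 2 by (simp add: hd_def)
    show ?thesis
      apply (rule has_field_derivative_transform_within_open[OF d, of "{..<0}"])
      using 2 by (auto simp: hill_neg)
  next
    case 3
    have hd0: "hd m 0 = 0" by (simp add: hd_def)
    have lim: "((\<lambda>y. \<bar>y\<bar> powr (m - 1)) \<longlongrightarrow> 0) (at 0)"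
      by (rule tendsto_zero_powrI) (auto intro!: tendsto_eq_intros simp: m)
    have bnd: "norm ((hill m y - hill m 0) / (y - 0)) \<le> \<bar>y\<bar> powr (m - 1)" for y
    proof (cases "y = 0")
      case True then show ?thesis by simp
    next
      case False
      have a: "\<bar>hill m y\<bar> = \<bar>y\<bar> powr m / (1 + \<bar>y\<bar> powr m)"
        using False by (auto simp: hill_def abs_mult sgn_if)
      have "\<bar>y\<bar> powr m / (1 + \<bar>y\<bar> powr m) \<le> \<bar>y\<bar> powr m"
        using powr_ge_zero[of "\<bar>y\<bar>" m] by (simp add: divide_le_eq distrib_left)
      also have "\<bar>y\<bar> powr m = \<bar>y\<bar> powr (m - 1) * \<bar>y\<bar>"
        using False by (simp add: powr_diff)
      finally have "\<bar>hill m y\<bar> \<le> \<bar>y\<bar> powr (m - 1) * \<bar>y\<bar>" using a by simp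
      then show ?thesis using False by (simp add: abs_divide divide_le_eq)
    qed
    have "((\<lambda>y. (hill m y - hill m 0) / (y - 0)) \<longlongrightarrow> 0) (at 0)"
      by (rule Lim_null_comparison[OF _ lim]) (use bnd in auto)
    then show ?thesis using 3 hd0 by (simp add: has_field_derivative_iff)
  qed
qed

lemma hd_nonneg: "m > 1 \<Longrightarrow> hd m z \<ge> 0"
  by (simp add: hd_def)

lemma hd_pos: assumes "m > 1" "z \<noteq> 0" shows "hd m z > 0"
proof -
  have "\<bar>z\<bar> powr (m - 1) > 0" using assms by simp
  moreover have "(1 + \<bar>z\<bar> powr m)^2 > 0" using den_pos[of z m] by (simp del: den_pos)
  ultimately show ?thesis using assms unfolding hd_def by simp
qed

lemma hd_le: assumes m: "m > 1" shows "hd m z \<le> m"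
proof -
  let ?u = "\<bar>z\<bar>"
  have q: "?u powr (m - 1) \<le> (1 + ?u powr m)^2"
  proof (cases "?u \<le> 1")
    case True
    then have "?u powr (m - 1) \<le> 1" using m by (intro powr_le1) auto
    also have "1 \<le> (1 + ?u powr m)^2" using one_le_power[of "1 + ?u powr m" 2] by simp
    finally show ?thesis .
  next
    case False
    then have "?u powr (m - 1) \<le> ?u powr m" by (intro powr_mono) auto
    also have "\<dots> \<le> 1 + ?u powr m" by simp
    also have "\<dots> \<le> (1 + ?u powr m)^2"
      using mult_left_mono[of 1 "1 + ?u powr m" "1 + ?u powr m"] by (simp add: power2_eq_square)
    finally show ?thesis .
  qed
  have "hd m z = m * (?u powr (m - 1) / (1 + ?u powr m)^2)" by (simp add: hd_def)
  also have "\<dots> \<le> m * 1"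
    using q m by (intro mult_left_mono) (auto simp: divide_le_eq)
  finally show ?thesis by simp
qed

lemma hd_cont: assumes "m > 1" shows "continuous_on S (hd m)"
proof -
  have "\<And>z. (1 + \<bar>z\<bar> powr m)^2 \<noteq> 0"
    using den_pos by (metis less_irrefl zero_eq_power2)
  then show ?thesis
    unfolding hd_def
    using assms by (intro continuous_intros continuous_on_powr') (auto intro!: continuous_intros)
qed

lemma hill_lip: assumes m: "m > 1" shows "\<bar>hill m b - hill m a\<bar> \<le> m * \<bar>b - a\<bar>"
proof -
  have *: "\<bar>hill m b - hill m a\<bar> \<le> m * \<bar>b - a\<bar>" if ab: "a < b" for a b
  proof -
    obtain z where "hill m b - hill m a = (b - a) * hd m z"
      using MVT2[OF ab, of "hill m" "hd m"] hill_deriv[OF m] by auto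
    then show ?thesis using hd_le[OF m, of z] hd_nonneg[OF m, of z] ab
      by (simp add: abs_mult mult.commute mult_right_mono)
  qed
  show ?thesis
    using *[of a b] *[of b a] by (cases a b rule: linorder_cases) (auto simp: abs_minus_commute)
qed

lemma hill_unif:
  assumes m: "m > 1" and eps: "\<epsilon> > 0"
  shows "\<exists>\<delta>>0. \<forall>a b. \<bar>a\<bar> \<le> B \<longrightarrow> \<bar>b - a\<bar> < \<delta> \<longrightarrow>
            \<bar>hill m b - hill m a - hd m a * (b - a)\<bar> \<le> \<epsilon> * \<bar>b - a\<bar>"
proof -
  have "uniformly_continuous_on {-(\<bar>B\<bar>+1)..\<bar>B\<bar>+1} (hd m)"
    by (rule compact_uniformly_continuous[OF hd_cont[OF m]]) auto
  then obtain d where d: "d > 0" and dd: "\<And>x x'. x \<in> {-(\<bar>B\<bar>+1)..\<bar>B\<bar>+1} \<Longrightarrow> x' \<in> {-(\<bar>B\<bar>+1)..\<bar>B\<bar>+1}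
      \<Longrightarrow> dist x' x < d \<Longrightarrow> dist (hd m x') (hd m x) < \<epsilon>"
    using eps unfolding uniformly_continuous_on_def by metis
  have main: "\<bar>hill m b - hill m a - hd m a * (b - a)\<bar> \<le> \<epsilon> * \<bar>b - a\<bar>"
    if a: "\<bar>a\<bar> \<le> B" and ba: "\<bar>b - a\<bar> < min d 1" for a b
  proof -
    have ex: "\<exists>z. \<bar>z - a\<bar> \<le> \<bar>b - a\<bar> \<and> hill m b - hill m a = (b - a) * hd m z"
    proof (cases a b rule: linorder_cases)
      case less
      then obtain z where "a < z" "z < b" "hill m b - hill m a = (b - a) * hd m z"
        using MVT2[OF less, of "hill m" "hd m"] hill_deriv[OF m] by auto
      then show ?thesis by (intro exI[of _ z]) auto
    next
      case equal then show ?thesis by auto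
    next
      case greater
      then obtain z where "b < z" "z < a" "hill m a - hill m b = (a - b) * hd m z"
        using MVT2[OF greater, of "hill m" "hd m"] hill_deriv[OF m] by auto
      then show ?thesis by (intro exI[of _ z]) (auto simp: algebra_simps)
    qed
    then obtain z where z: "\<bar>z - a\<bar> \<le> \<bar>b - a\<bar>" "hill m b - hill m a = (b - a) * hd m z" by blast
    have "dist (hd m z) (hd m a) < \<epsilon>"
      apply (rule dd) using a z ba by (auto simp: dist_real_def)
    then have "\<bar>hd m z - hd m a\<bar> \<le> \<epsilon>" by (simp add: dist_real_def)
    then have "\<bar>b - a\<bar> * \<bar>hd m z - hd m a\<bar> \<le> \<bar>b - a\<bar> * \<epsilon>"
      by (intro mult_left_mono) auto
    moreover have "hill m b - hill m a - hd m a * (b - a) = (b - a) * (hd m z - hd m a)"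
      using z by (simp add: algebra_simps)
    ultimately show ?thesis by (simp add: abs_mult mult.commute)
  qed
  show ?thesis
    by (rule exI[of _ "min d 1"]) (use d main in auto)
qed



lemma voc:
  fixes u g :: "real \<Rightarrow> real"
  assumes d: "\<And>s. (u has_real_derivative (g s - a * u s)) (at s)" and t: "0 \<le> t"
  shows "u t = exp (-a * t) * (u 0 + integral {0..t} (\<lambda>s. exp (a * s) * g s))"
proof -
  have dd: "((\<lambda>s. exp(a * s) * u s) has_real_derivative exp(a * s) * g s) (at s)" for s
  proof -
    have e: "((\<lambda>s. exp(a * s)) has_real_derivative exp(a * s) * a) (at s)"
      by (auto intro!: derivative_eq_intros)
    have "((\<lambda>s. exp(a * s) * u s) has_real_derivative
            (exp(a * s) * a) * u s + (g s - a * u s) * exp(a * s)) (at s)"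
      by (rule DERIV_mult[OF e d])
    then show ?thesis by (simp add: algebra_simps)
  qed
  have "((\<lambda>s. exp (a * s) * g s) has_integral (exp(a * t) * u t - exp(a * 0) * u 0)) {0..t}"
    apply (rule fundamental_theorem_of_calculus[OF t])
    using dd by (auto simp: has_real_derivative_iff_has_vector_derivative[symmetric]
        intro: has_field_derivative_at_within)
  then have "integral {0..t} (\<lambda>s. exp (a * s) * g s) = exp(a * t) * u t - u 0"
    by (simp add: integral_unique)
  then have "u 0 + integral {0..t} (\<lambda>s. exp (a * s) * g s) = exp(a * t) * u t" by simp
  then show ?thesis by (simp add: exp_minus field_simps)
qed

lemma gronwall:
  fixes v :: "real \<Rightarrow> real"
  assumes cont: "continuous_on {0..T} v"
    and le: "\<And>s. s \<in> {0..T} \<Longrightarrow> v s \<le> c + b * integral {0..s} v"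
    and b: "b \<ge> 0" and s: "s \<in> {0..T}"
  shows "v s \<le> c * exp (b * s)"
proof -
  define W where "W \<sigma> = (c + b * integral {0..\<sigma>} v) * exp (-b * \<sigma>)" for \<sigma>
  have "W s \<le> W 0"
  proof (rule DERIV_nonpos_imp_decreasing_open[of 0 s W])
    show "0 \<le> s" using s by auto
    fix x assume x: "0 < x" "x < s"
    then have xi: "x \<in> interior {0..T}" using s by auto
    have xT: "x \<in> {0..T}" using x s by auto
    have "((\<lambda>y. integral {0..y} v) has_real_derivative v x) (at x within {0..T})"
      by (rule integral_has_real_derivative[OF cont xT])
    then have I: "((\<lambda>y. integral {0..y} v) has_real_derivative v x) (at x)"
      using at_within_interior[OF xi] by metis
    have "(W has_real_derivative (b * v x) * exp (-b * x) + (c + b * integral {0..x} v) * (exp (-b * x) * (-b * 1))) (at x)"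
      unfolding W_def by (intro derivative_eq_intros) (auto intro: I)
    moreover have "(b * v x) * exp (-b * x) + (c + b * integral {0..x} v) * (exp (-b * x) * (-b * 1))
        = b * exp (-b * x) * (v x - (c + b * integral {0..x} v))"
      by (simp add: algebra_simps)
    moreover have "b * exp (-b * x) * (v x - (c + b * integral {0..x} v)) \<le> 0"
      using le[of x] x s b by (intro mult_nonneg_nonpos) auto
    ultimately show "\<exists>y. (W has_real_derivative y) (at x) \<and> y \<le> 0" by auto
  next
    have "continuous_on {0..T} (\<lambda>y. integral {0..y} v)"
      by (intro indefinite_integral_continuous_1 integrable_continuous_real cont)
    then have "continuous_on {0..s} (\<lambda>y. integral {0..y} v)"
      by (rule continuous_on_subset) (use s in auto)
    then show "continuous_on {0..s} W"
      unfolding W_def by (intro continuous_intros) auto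
  qed
  then have "(c + b * integral {0..s} v) * exp (-b * s) \<le> c" by (simp add: W_def)
  then have "c + b * integral {0..s} v \<le> c * exp (b * s)"
    by (simp add: exp_minus field_simps)
  then show ?thesis using le[OF s] by linarith
qed

lemma int_pos:
  fixes f :: "real \<Rightarrow> real"
  assumes cont: "continuous_on {0..t} f" and nn: "\<And>s. s \<in> {0..t} \<Longrightarrow> f s \<ge> 0"
    and s0: "s0 \<in> {0..t}" and p: "f s0 > 0" and t: "t > 0"
  shows "integral {0..t} f > 0"
proof -
  have "continuous (at s0 within {0..t}) f" using cont s0 continuous_on_eq_continuous_within by blast
  then obtain d where d: "d > 0" and dd: "\<And>s. s \<in> {0..t} \<Longrightarrow> dist s s0 < d \<Longrightarrow> dist (f s) (f s0) < f s0 / 2"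
    using p unfolding continuous_within_eps_delta by (metis half_gt_zero)
  define c where "c = max 0 (s0 - d/2)"
  define e where "e = min t (s0 + d/2)"
  have ce: "c < e" using d t s0 by (auto simp: c_def e_def)
  have sub: "{c..e} \<subseteq> {0..t}" using s0 by (auto simp: c_def e_def)
  have bnd: "f s \<ge> f s0 / 2" if "s \<in> {c..e}" for s
  proof -
    have "s \<in> {0..t}" using that sub by auto
    moreover have "dist s s0 < d" using that d by (auto simp: c_def e_def dist_real_def)
    ultimately have "dist (f s) (f s0) < f s0 / 2" by (rule dd)
    then have A: "\<bar>f s - f s0\<bar> < f s0 / 2" by (simp only: dist_real_def)
    have "- (f s - f s0) \<le> \<bar>f s - f s0\<bar>" by (rule abs_ge_minus_self)
    then show ?thesis using A by linarith
  qed
  have "integral {c..e} (\<lambda>_. f s0 / 2) \<le> integral {c..e} f"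
    apply (rule integral_le)
    using bnd continuous_on_subset[OF cont sub] by (auto intro: integrable_continuous_real)
  also have "\<dots> \<le> integral {0..t} f"
    apply (rule integral_subset_le[OF sub])
    using continuous_on_subset[OF cont sub] cont nn by (auto intro: integrable_continuous_real)
  finally have "(e - c) * (f s0 / 2) \<le> integral {0..t} f" using ce by simp
  moreover have "(e - c) * (f s0 / 2) > 0" using ce p by simp
  ultimately show ?thesis by (smt (verit))
qed

lemma int_abs_le:
  fixes f g :: "real \<Rightarrow> real"
  assumes "continuous_on {0..t} f" "continuous_on {0..t} g"
    "\<And>s. s \<in> {0..t} \<Longrightarrow> \<bar>f s\<bar> \<le> g s"
  shows "\<bar>integral {0..t} f\<bar> \<le> integral {0..t} g"
  using integral_norm_bound_integral[of f "{0..t}" g] assms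
  by (auto intro: integrable_continuous_real)

lemma int_le:
  fixes f g :: "real \<Rightarrow> real"
  assumes "continuous_on {0..t} f" "continuous_on {0..t} g"
    "\<And>s. s \<in> {0..t} \<Longrightarrow> f s \<le> g s"
  shows "integral {0..t} f \<le> integral {0..t} g"
  using integral_le[of f "{0..t}" g] assms
  by (auto intro: integrable_continuous_real)

lemma mono_strict_aux:
  fixes g :: "real \<Rightarrow> real"
  assumes d: "\<And>s. (g has_real_derivative g' s) (at s)"
    and nn: "\<And>s. g' s \<ge> 0" and pos: "\<And>s. s \<noteq> s0 \<Longrightarrow> g' s > 0"
  shows "g 0 < g 1"
proof -
  obtain z1 where z1: "0 < z1" "z1 < 1/2" "g (1/2) - g 0 = (1/2 - 0) * g' z1"
    using MVT2[of 0 "1/2" g g'] d by auto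
  obtain z2 where z2: "1/2 < z2" "z2 < 1" "g 1 - g (1/2) = (1 - 1/2) * g' z2"
    using MVT2[of "1/2" 1 g g'] d by auto
  have "z1 \<noteq> s0 \<or> z2 \<noteq> s0" using z1 z2 by auto
  define A where "A = g' z1 + g' z2"
  have "A > 0" using nn[of z1] nn[of z2] pos[of z1] pos[of z2] \<open>z1 \<noteq> s0 \<or> z2 \<noteq> s0\<close>
    by (auto simp: A_def add_pos_nonneg add_nonneg_pos)
  moreover have "g 1 - g 0 = A / 2" using z1(3) z2(3) by (simp add: field_simps A_def)
  ultimately show ?thesis by linarith
qed

lemma int_pow:
  fixes s :: real
  assumes "s \<ge> 0"
  shows "integral {0..s} (\<lambda>\<sigma>. \<sigma> ^ k) = s ^ Suc k / Suc k"
proof -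
  have "((\<lambda>\<sigma>. \<sigma> ^ k) has_integral (s ^ Suc k / Suc k - 0 ^ Suc k / Suc k)) {0..s}"
  proof (rule fundamental_theorem_of_calculus[OF assms])
    fix x :: real
    have "((\<lambda>\<sigma>. \<sigma> ^ Suc k / Suc k) has_real_derivative (Suc k * x ^ k) / Suc k) (at x)"
      by (intro derivative_eq_intros) auto
    then have "((\<lambda>\<sigma>. \<sigma> ^ Suc k / Suc k) has_real_derivative x ^ k) (at x)"
      by (simp del: of_nat_Suc)
    then show "((\<lambda>\<sigma>. \<sigma> ^ Suc k / Suc k) has_vector_derivative x ^ k) (at x within {0..s})"
      by (simp add: has_real_derivative_iff_has_vector_derivative[symmetric] has_field_derivative_at_within)
  qed
  then show ?thesis by (simp add: integral_unique)
qed

lemma bounded_cont_img: "continuous_on {a..b::real} f \<Longrightarrow> bounded (f ` {a..b})"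
  by (intro compact_imp_bounded compact_continuous_image) auto



locale cyc =
  fixes m :: real and \<alpha> :: "nat \<Rightarrow> real" and e :: "nat \<Rightarrow> 'n::finite"
    and \<Phi> :: "real \<Rightarrow> real^'n \<Rightarrow> real^'n"
  assumes r2: "CARD('n) \<ge> 2"
    and e_bij: "bij_betw e {..<CARD('n)} UNIV"
    and alpha_pos: "\<And>k. k < CARD('n) \<Longrightarrow> \<alpha> k > 0"
    and m1: "m > 1"
    and flow0: "\<And>x. \<Phi> 0 x = x"
    and flow_ode: "\<And>x t. ((\<lambda>s. \<Phi> s x) has_vector_derivative cyc_field m \<alpha> e (\<Phi> t x)) (at t)"
begin

definition idx :: "'n \<Rightarrow> nat" where "idx i = inv_into {..<CARD('n)} e i"
definition pr :: "'n \<Rightarrow> 'n" where "pr i = (if idx i = 0 then e (CARD('n) - 1) else e (idx i - 1))"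
definition al :: "'n \<Rightarrow> real" where "al i = \<alpha> (idx i)"
definition G :: "'n \<Rightarrow> real^'n \<Rightarrow> real" where
  "G i v = (if idx i = 0 then hill m (v $ pr i) else v $ pr i)"
definition cf :: "real^'n \<Rightarrow> 'n \<Rightarrow> real \<Rightarrow> real" where
  "cf x i s = (if idx i = 0 then hd m (\<Phi> s x $ pr i) else 1)"

lemma idx_lt: "idx i < CARD('n)"
  unfolding idx_def using e_bij
  by (metis bij_betw_def inv_into_into iso_tuple_UNIV_I lessThan_iff)

lemma e_idx[simp]: "e (idx i) = i"
  unfolding idx_def using e_bij by (metis bij_betw_def f_inv_into_f iso_tuple_UNIV_I)

lemma idx_e[simp]: "k < CARD('n) \<Longrightarrow> idx (e k) = k"
  unfolding idx_def using e_bij by (simp add: bij_betw_inv_into_left)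

lemma al_pos: "al i > 0"
  unfolding al_def using alpha_pos idx_lt by blast

lemma field_comp: "cyc_field m \<alpha> e v $ i = G i v - al i * v $ i"
  unfolding cyc_field_def G_def al_def pr_def idx_def[symmetric] by (simp add: Let_def)

lemma coord_deriv: "((\<lambda>s. \<Phi> s x $ i) has_real_derivative (G i (\<Phi> t x) - al i * \<Phi> t x $ i)) (at t)"
  using bounded_linear.has_vector_derivative[OF bounded_linear_vec_nth[of i] flow_ode[of x t]]
  by (simp add: has_real_derivative_iff_has_vector_derivative field_comp)

lemma Phi_isCont: "isCont (\<lambda>s. \<Phi> s x) t"
  using has_vector_derivative_continuous[OF flow_ode[of x t]] .

lemma Phi_c_isCont: "isCont (\<lambda>s. \<Phi> s x $ i) t"
  using DERIV_isCont[OF coord_deriv] .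

lemma Phi_c_cont: "continuous_on S (\<lambda>s. \<Phi> s x $ i)"
  by (intro continuous_at_imp_continuous_on) (auto intro: Phi_c_isCont)

lemma hill_isCont: "isCont (hill m) z"
  using DERIV_isCont[OF hill_deriv[OF m1]] .

lemma G_cont: "continuous_on S (\<lambda>s. G i (\<Phi> s x))"
proof (intro continuous_at_imp_continuous_on ballI)
  fix t
  show "isCont (\<lambda>s. G i (\<Phi> s x)) t"
  proof (cases "idx i = 0")
    case True
    have "isCont (\<lambda>s. hill m (\<Phi> s x $ pr i)) t"
      using continuous_at_compose[OF Phi_c_isCont hill_isCont] by (simp add: o_def)
    then show ?thesis using True by (simp add: G_def)
  next
    case False
    then show ?thesis using Phi_c_isCont by (simp add: G_def)
  qed
qed

lemma hd_isCont: "isCont (hd m) z"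
  using hd_cont[OF m1, of UNIV] by (simp add: continuous_on_eq_continuous_at)

lemma cf_cont: "continuous_on S (cf x i)"
proof (intro continuous_at_imp_continuous_on ballI)
  fix t
  show "isCont (cf x i) t"
  proof (cases "idx i = 0")
    case True
    have "isCont (\<lambda>s. hd m (\<Phi> s x $ pr i)) t"
      using continuous_at_compose[OF Phi_c_isCont hd_isCont] by (simp add: o_def)
    then show ?thesis using True by (simp add: cf_def[abs_def])
  next
    case False
    then show ?thesis by (simp add: cf_def[abs_def])
  qed
qed

lemma cf_nonneg: "cf x i s \<ge> 0"
  using hd_nonneg[OF m1] by (simp add: cf_def)

lemma cf_le: "cf x i s \<le> m"
  using hd_le[OF m1] m1 by (simp add: cf_def)

lemma G_lip: "\<bar>G i u - G i v\<bar> \<le> m * \<bar>u $ pr i - v $ pr i\<bar>"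
proof (cases "idx i = 0")
  case True then show ?thesis using hill_lip[OF m1] by (simp add: G_def)
next
  case False
  then show ?thesis using m1 by (simp add: G_def mult_le_cancel_right1)
qed

lemma voc_Phi: "t \<ge> 0 \<Longrightarrow>
   \<Phi> t x $ i = exp (-al i * t) * (x $ i + integral {0..t} (\<lambda>s. exp (al i * s) * G i (\<Phi> s x)))"
  using voc[of "\<lambda>s. \<Phi> s x $ i" "\<lambda>s. G i (\<Phi> s x)" "al i" t] coord_deriv flow0 by simp

lemma exp_le1: "\<sigma> \<le> s \<Longrightarrow> exp (-al i * s) * exp (al i * \<sigma>) \<le> 1"
proof -
  assume "\<sigma> \<le> s"
  then have "al i * \<sigma> \<le> al i * s" using al_pos by (intro mult_left_mono) (auto intro: less_imp_le)
  then have "exp (-al i * s + al i * \<sigma>) \<le> 1" by simp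
  then show ?thesis by (simp add: mult_exp_exp)
qed

lemma diff_voc:
  assumes "s \<ge> 0"
  shows "\<Phi> s y $ i - \<Phi> s x $ i = exp (-al i * s) * ((y $ i - x $ i) +
           integral {0..s} (\<lambda>\<sigma>. exp (al i * \<sigma>) * (G i (\<Phi> \<sigma> y) - G i (\<Phi> \<sigma> x))))"
proof -
  have c1: "continuous_on {0..s} (\<lambda>\<sigma>. exp (al i * \<sigma>) * G i (\<Phi> \<sigma> y))"
    by (intro continuous_intros G_cont)
  have c2: "continuous_on {0..s} (\<lambda>\<sigma>. exp (al i * \<sigma>) * G i (\<Phi> \<sigma> x))"
    by (intro continuous_intros G_cont)
  have "integral {0..s} (\<lambda>\<sigma>. exp (al i * \<sigma>) * (G i (\<Phi> \<sigma> y) - G i (\<Phi> \<sigma> x)))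
     = integral {0..s} (\<lambda>\<sigma>. exp (al i * \<sigma>) * G i (\<Phi> \<sigma> y) - exp (al i * \<sigma>) * G i (\<Phi> \<sigma> x))"
    by (simp add: algebra_simps)
  also have "\<dots> = integral {0..s} (\<lambda>\<sigma>. exp (al i * \<sigma>) * G i (\<Phi> \<sigma> y)) - integral {0..s} (\<lambda>\<sigma>. exp (al i * \<sigma>) * G i (\<Phi> \<sigma> x))"
    by (rule integral_diff) (use c1 c2 integrable_continuous_real in auto)
  finally have F: "integral {0..s} (\<lambda>\<sigma>. exp (al i * \<sigma>) * (G i (\<Phi> \<sigma> y) - G i (\<Phi> \<sigma> x))) =
     integral {0..s} (\<lambda>\<sigma>. exp (al i * \<sigma>) * G i (\<Phi> \<sigma> y)) - integral {0..s} (\<lambda>\<sigma>. exp (al i * \<sigma>) * G i (\<Phi> \<sigma> x))" .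
  show ?thesis
    unfolding F voc_Phi[OF assms, of y i] voc_Phi[OF assms, of x i] by (simp add: algebra_simps)
qed

lemma lip:
  assumes t: "t \<ge> 0"
  shows "(\<Sum>i\<in>UNIV. \<bar>\<Phi> t y $ i - \<Phi> t x $ i\<bar>) \<le> (\<Sum>i\<in>UNIV. \<bar>y $ i - x $ i\<bar>) * exp (CARD('n) * m * t)"
proof -
  define V where "V s = (\<Sum>i\<in>UNIV. \<bar>\<Phi> s y $ i - \<Phi> s x $ i\<bar>)" for s
  have Vc: "continuous_on S V" for S unfolding V_def by (intro continuous_intros Phi_c_cont)
  have Vnn: "V s \<ge> 0" for s unfolding V_def by (simp add: sum_nonneg)
  have step: "\<bar>\<Phi> s y $ i - \<Phi> s x $ i\<bar> \<le> \<bar>y $ i - x $ i\<bar> + integral {0..s} (\<lambda>\<sigma>. m * V \<sigma>)"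
    if s: "s \<ge> 0" for s i
  proof -
    let ?g = "\<lambda>\<sigma>. exp (al i * \<sigma>) * (G i (\<Phi> \<sigma> y) - G i (\<Phi> \<sigma> x))"
    have gc: "continuous_on {0..s} ?g" by (intro continuous_intros G_cont)
    have "\<bar>integral {0..s} ?g\<bar> \<le> integral {0..s} (\<lambda>\<sigma>. exp (al i * \<sigma>) * (m * V \<sigma>))"
    proof (rule int_abs_le[OF gc])
      show "continuous_on {0..s} (\<lambda>\<sigma>. exp (al i * \<sigma>) * (m * V \<sigma>))"
        by (intro continuous_intros Vc)
      fix \<sigma>
      have "\<bar>G i (\<Phi> \<sigma> y) - G i (\<Phi> \<sigma> x)\<bar> \<le> m * \<bar>\<Phi> \<sigma> y $ pr i - \<Phi> \<sigma> x $ pr i\<bar>"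
        by (rule G_lip)
      also have "\<dots> \<le> m * V \<sigma>"
        unfolding V_def using m1
        by (intro mult_left_mono member_le_sum[of "pr i" UNIV "\<lambda>i. \<bar>\<Phi> \<sigma> y $ i - \<Phi> \<sigma> x $ i\<bar>"]) auto
      finally show "\<bar>?g \<sigma>\<bar> \<le> exp (al i * \<sigma>) * (m * V \<sigma>)"
        by (simp add: abs_mult)
    qed
    then have "exp (-al i * s) * \<bar>integral {0..s} ?g\<bar> \<le> exp (-al i * s) * integral {0..s} (\<lambda>\<sigma>. exp (al i * \<sigma>) * (m * V \<sigma>))"
      by (intro mult_left_mono) auto
    also have "\<dots> = integral {0..s} (\<lambda>\<sigma>. exp (-al i * s) * (exp (al i * \<sigma>) * (m * V \<sigma>)))"
      by (simp add: integral_mult_right)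
    also have "\<dots> \<le> integral {0..s} (\<lambda>\<sigma>. m * V \<sigma>)"
    proof (rule int_le)
      show "continuous_on {0..s} (\<lambda>\<sigma>. exp (-al i * s) * (exp (al i * \<sigma>) * (m * V \<sigma>)))"
        by (intro continuous_intros Vc)
      show "continuous_on {0..s} (\<lambda>\<sigma>. m * V \<sigma>)" by (intro continuous_intros Vc)
      fix \<sigma> assume "\<sigma> \<in> {0..s}"
      then have "exp (-al i * s) * exp (al i * \<sigma>) \<le> 1" by (intro exp_le1) auto
      moreover have "m * V \<sigma> \<ge> 0" using m1 Vnn by simp
      ultimately have "(exp (-al i * s) * exp (al i * \<sigma>)) * (m * V \<sigma>) \<le> 1 * (m * V \<sigma>)"
        by (intro mult_right_mono) auto
      then show "exp (-al i * s) * (exp (al i * \<sigma>) * (m * V \<sigma>)) \<le> m * V \<sigma>"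
        by (simp add: mult.assoc)
    qed
    finally have A: "exp (-al i * s) * \<bar>integral {0..s} ?g\<bar> \<le> integral {0..s} (\<lambda>\<sigma>. m * V \<sigma>)" .
    have B: "exp (-al i * s) * \<bar>y $ i - x $ i\<bar> \<le> \<bar>y $ i - x $ i\<bar>"
    proof -
      have "exp (-al i * s) \<le> 1" using al_pos[of i] s by simp
      then show ?thesis using mult_right_mono[of "exp (-al i * s)" 1 "\<bar>y $ i - x $ i\<bar>"] by simp
    qed
    have "\<bar>\<Phi> s y $ i - \<Phi> s x $ i\<bar> = exp (-al i * s) * \<bar>(y $ i - x $ i) + integral {0..s} ?g\<bar>"
      using diff_voc[OF s, of y i x] by (simp add: abs_mult)
    also have "\<dots> \<le> exp (-al i * s) * (\<bar>y $ i - x $ i\<bar> + \<bar>integral {0..s} ?g\<bar>)"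
      by (intro mult_left_mono abs_triangle_ineq) auto
    finally show ?thesis using A B by (simp add: distrib_left)
  qed
  have "V s \<le> V 0 + (CARD('n) * m) * integral {0..s} V" if "s \<in> {0..t}" for s
  proof -
    have V0: "V 0 = (\<Sum>i\<in>UNIV. \<bar>y $ i - x $ i\<bar>)" by (simp add: V_def flow0)
    have "V s = (\<Sum>i\<in>UNIV. \<bar>\<Phi> s y $ i - \<Phi> s x $ i\<bar>)" by (rule V_def)
    also have "\<dots> \<le> (\<Sum>i\<in>UNIV. \<bar>y $ i - x $ i\<bar> + integral {0..s} (\<lambda>\<sigma>. m * V \<sigma>))"
      using that by (intro sum_mono step) auto
    also have "\<dots> = V 0 + (CARD('n) * m) * integral {0..s} V"
      by (simp add: V0 sum.distrib integral_mult_right)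
    finally show ?thesis .
  qed
  then have "V t \<le> V 0 * exp (CARD('n) * m * t)"
    by (intro gronwall[OF Vc]) (use t m1 in auto)
  then show ?thesis by (simp add: V_def flow0)
qed

fun P :: "real^'n \<Rightarrow> nat \<Rightarrow> 'n \<Rightarrow> 'n \<Rightarrow> real \<Rightarrow> real" where
  "P x 0 i j s = 0"
| "P x (Suc k) i j s = exp (-al i * s) * ((if i = j then 1 else 0) +
      integral {0..s} (\<lambda>\<sigma>. exp (al i * \<sigma>) * cf x i \<sigma> * P x k (pr i) j \<sigma>))"

lemma P_cont: "continuous_on {0..T} (P x k i j)"
proof (induction k arbitrary: i j)
  case 0
  then show ?case by (simp add: P.simps(1)[abs_def])
next
  case (Suc k)
  have "continuous_on {0..T} (\<lambda>\<sigma>. exp (al i * \<sigma>) * cf x i \<sigma> * P x k (pr i) j \<sigma>)"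
    by (intro continuous_intros cf_cont Suc.IH)
  then have "continuous_on {0..T} (\<lambda>s. integral {0..s} (\<lambda>\<sigma>. exp (al i * \<sigma>) * cf x i \<sigma> * P x k (pr i) j \<sigma>))"
    by (intro indefinite_integral_continuous_1 integrable_continuous_real)
  then show ?case
    unfolding P.simps(2)[abs_def] by (intro continuous_intros)
qed

lemma P_nonneg: "s \<ge> 0 \<Longrightarrow> P x k i j s \<ge> 0"
proof (induction k arbitrary: i j s)
  case 0
  then show ?case by simp
next
  case (Suc k)
  have "integral {0..s} (\<lambda>\<sigma>. exp (al i * \<sigma>) * cf x i \<sigma> * P x k (pr i) j \<sigma>) \<ge> 0"
  proof (rule integral_nonneg)
    show "(\<lambda>\<sigma>. exp (al i * \<sigma>) * cf x i \<sigma> * P x k (pr i) j \<sigma>) integrable_on {0..s}"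
      by (auto intro!: integrable_continuous_real continuous_intros cf_cont P_cont)
    fix \<sigma> assume "\<sigma> \<in> {0..s}"
    then show "0 \<le> exp (al i * \<sigma>) * cf x i \<sigma> * P x k (pr i) j \<sigma>"
      using Suc.IH[of \<sigma>] cf_nonneg by auto
  qed
  then show ?case by simp
qed

lemma P_diff_bound: "s \<ge> 0 \<Longrightarrow> \<bar>P x (Suc k) i j s - P x k i j s\<bar> \<le> (m * s) ^ k / fact k"
proof (induction k arbitrary: i j s)
  case 0
  have "exp (-al i * s) \<le> 1" using al_pos[of i] 0 by simp
  then show ?case using al_pos[of i] 0 by (auto intro: mult_nonneg_nonneg less_imp_le)
next
  case (Suc k)
  let ?f = "\<lambda>k \<sigma>. exp (al i * \<sigma>) * cf x i \<sigma> * P x k (pr i) j \<sigma>"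
  have fc: "continuous_on {0..s} (?f k)" for k by (intro continuous_intros cf_cont P_cont)
  have "P x (Suc (Suc k)) i j s - P x (Suc k) i j s
      = exp (-al i * s) * (integral {0..s} (?f (Suc k)) - integral {0..s} (?f k))"
    by (simp add: algebra_simps)
  also have "integral {0..s} (?f (Suc k)) - integral {0..s} (?f k) =
       integral {0..s} (\<lambda>\<sigma>. ?f (Suc k) \<sigma> - ?f k \<sigma>)"
    by (rule integral_diff[symmetric]) (rule integrable_continuous_real[OF fc])+
  finally have eq: "P x (Suc (Suc k)) i j s - P x (Suc k) i j s =
      integral {0..s} (\<lambda>\<sigma>. exp (-al i * s) * (?f (Suc k) \<sigma> - ?f k \<sigma>))"
    by (simp add: integral_mult_right)
  have "\<bar>integral {0..s} (\<lambda>\<sigma>. exp (-al i * s) * (?f (Suc k) \<sigma> - ?f k \<sigma>))\<bar>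
      \<le> integral {0..s} (\<lambda>\<sigma>. (m ^ Suc k / fact k) * \<sigma> ^ k)"
  proof (rule int_abs_le)
    show "continuous_on {0..s} (\<lambda>\<sigma>. exp (-al i * s) * (?f (Suc k) \<sigma> - ?f k \<sigma>))"
      by (intro continuous_intros fc)
    show "continuous_on {0..s} (\<lambda>\<sigma>. (m ^ Suc k / fact k) * \<sigma> ^ k)"
      by (intro continuous_intros)
    fix \<sigma> assume \<sigma>: "\<sigma> \<in> {0..s}"
    have E: "exp (-al i * s) * (?f (Suc k) \<sigma> - ?f k \<sigma>) =
        (exp (-al i * s) * exp (al i * \<sigma>)) * cf x i \<sigma> * (P x (Suc k) (pr i) j \<sigma> - P x k (pr i) j \<sigma>)"
      by (simp add: algebra_simps)
    have A: "\<bar>exp (-al i * s) * exp (al i * \<sigma>)\<bar> \<le> 1" using exp_le1[of \<sigma> s i] \<sigma> by simp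
    have B: "\<bar>cf x i \<sigma>\<bar> \<le> m" using cf_le cf_nonneg by simp
    have C: "\<bar>P x (Suc k) (pr i) j \<sigma> - P x k (pr i) j \<sigma>\<bar> \<le> (m * \<sigma>) ^ k / fact k"
        using Suc.IH \<sigma> by auto
    have "\<bar>(exp (-al i * s) * exp (al i * \<sigma>)) * cf x i \<sigma> * (P x (Suc k) (pr i) j \<sigma> - P x k (pr i) j \<sigma>)\<bar>
       = \<bar>exp (-al i * s) * exp (al i * \<sigma>)\<bar> * \<bar>cf x i \<sigma>\<bar> * \<bar>P x (Suc k) (pr i) j \<sigma> - P x k (pr i) j \<sigma>\<bar>"
      by (simp add: abs_mult)
    also have "\<dots> \<le> 1 * m * ((m * \<sigma>) ^ k / fact k)"
      by (rule mult_mono[OF mult_mono[OF A B] C]) (use m1 in auto)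
    also have "1 * m * ((m * \<sigma>) ^ k / fact k) = (m ^ Suc k / fact k) * \<sigma> ^ k"
      by (simp add: power_mult_distrib)
    finally show "\<bar>exp (-al i * s) * (?f (Suc k) \<sigma> - ?f k \<sigma>)\<bar> \<le> (m ^ Suc k / fact k) * \<sigma> ^ k"
      unfolding E .
  qed
  also have "integral {0..s} (\<lambda>\<sigma>. (m ^ Suc k / fact k) * \<sigma> ^ k) = (m ^ Suc k / fact k) * (s ^ Suc k / Suc k)"
    using int_pow[OF Suc.prems, of k] by (simp add: integral_mult_right)
  also have "\<dots> = (m * s) ^ Suc k / fact (Suc k)"
    by (simp add: power_mult_distrib field_simps del: of_nat_Suc)
  finally show ?case using eq by simp
qed

definition Y :: "real^'n \<Rightarrow> 'n \<Rightarrow> 'n \<Rightarrow> real \<Rightarrow> real" where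
  "Y x i j s = (\<Sum>k. P x (Suc k) i j s - P x k i j s)"

lemma P_unif: "uniform_limit {0..T} (\<lambda>n. P x n i j) (Y x i j) sequentially"
proof -
  have "uniform_limit {0..T} (\<lambda>n s. \<Sum>k<n. P x (Suc k) i j s - P x k i j s)
          (\<lambda>s. \<Sum>k. P x (Suc k) i j s - P x k i j s) sequentially"
  proof (rule Weierstrass_m_test[where M = "\<lambda>k. (m * T) ^ k / fact k"])
    fix k s assume s: "s \<in> {0..T}"
    have "\<bar>P x (Suc k) i j s - P x k i j s\<bar> \<le> (m * s) ^ k / fact k"
      using s by (intro P_diff_bound) auto
    also have "\<dots> \<le> (m * T) ^ k / fact k"
      using s m1 by (intro divide_right_mono power_mono mult_left_mono) auto
    finally show "norm (P x (Suc k) i j s - P x k i j s) \<le> (m * T) ^ k / fact k" by simp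
  next
    show "summable (\<lambda>k. (m * T) ^ k / fact k)"
      using summable_exp[of "m * T"] by (simp add: divide_inverse mult.commute)
  qed
  moreover have "(\<lambda>n s. \<Sum>k<n. P x (Suc k) i j s - P x k i j s) = (\<lambda>n. P x n i j)"
  proof (intro ext)
    fix n s
    show "(\<Sum>k<n. P x (Suc k) i j s - P x k i j s) = P x n i j s"
      using sum_lessThan_telescope[of "\<lambda>k. P x k i j s" n] by (simp only: P.simps(1) diff_zero)
  qed
  ultimately show ?thesis by (simp add: Y_def[abs_def])
qed

lemma Y_cont: "continuous_on {0..T} (Y x i j)"
  by (rule uniform_limit_theorem[OF _ P_unif]) (intro always_eventually allI P_cont, simp)

lemma Y_lim: "s \<ge> 0 \<Longrightarrow> (\<lambda>n. P x n i j s) \<longlonglongrightarrow> Y x i j s"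
  by (rule tendsto_uniform_limitI[OF P_unif[where T = s]]) auto

lemma Y_nonneg: "s \<ge> 0 \<Longrightarrow> Y x i j s \<ge> 0"
  by (rule LIMSEQ_le_const[OF Y_lim]) (auto intro: P_nonneg)

lemma Y_eq:
  assumes s: "s \<ge> 0"
  shows "Y x i j s = exp (-al i * s) * ((if i = j then 1 else 0) +
      integral {0..s} (\<lambda>\<sigma>. exp (al i * \<sigma>) * cf x i \<sigma> * Y x (pr i) j \<sigma>))"
proof -
  have cc: "continuous_on {0..s} (\<lambda>\<sigma>. exp (al i * \<sigma>) * cf x i \<sigma>)"
    by (intro continuous_intros cf_cont)
  have u: "uniform_limit {0..s} (\<lambda>n \<sigma>. (exp (al i * \<sigma>) * cf x i \<sigma>) * P x n (pr i) j \<sigma>)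
       (\<lambda>\<sigma>. (exp (al i * \<sigma>) * cf x i \<sigma>) * Y x (pr i) j \<sigma>) sequentially"
    by (rule uniform_lim_mult[OF uniform_limit_const P_unif])
       (intro bounded_cont_img cc Y_cont)+
  obtain I J where I: "\<And>n. ((\<lambda>\<sigma>. (exp (al i * \<sigma>) * cf x i \<sigma>) * P x n (pr i) j \<sigma>) has_integral I n) {0..s}"
    and J: "((\<lambda>\<sigma>. (exp (al i * \<sigma>) * cf x i \<sigma>) * Y x (pr i) j \<sigma>) has_integral J) {0..s}"
    and IJ: "I \<longlonglongrightarrow> J"
    by (rule uniform_limit_integral[OF u]) (auto intro!: continuous_intros cf_cont P_cont)
  have II: "integral {0..s} (\<lambda>\<sigma>. (exp (al i * \<sigma>) * cf x i \<sigma>) * P x n (pr i) j \<sigma>) = I n" for n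
    using I integral_unique by blast
  have "(\<lambda>n. P x (Suc n) i j s) = (\<lambda>n. exp (-al i * s) * ((if i = j then 1 else 0) + I n))"
    by (simp only: P.simps II)
  moreover have "(\<lambda>n. exp (-al i * s) * ((if i = j then 1 else 0) + I n)) \<longlonglongrightarrow> exp (-al i * s) * ((if i = j then 1 else 0) + J)"
    by (intro tendsto_intros IJ)
  ultimately have "(\<lambda>n. P x (Suc n) i j s) \<longlonglongrightarrow> exp (-al i * s) * ((if i = j then 1 else 0) + J)"
    by simp
  moreover have "(\<lambda>n. P x (Suc n) i j s) \<longlonglongrightarrow> Y x i j s"
    using Y_lim[OF s] by (rule LIMSEQ_Suc)
  ultimately have "Y x i j s = exp (-al i * s) * ((if i = j then 1 else 0) + J)"
    using LIMSEQ_unique by blast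
  then show ?thesis using integral_unique[OF J] by simp
qed

end



context cyc begin

lemma kern_bound:
  assumes s: "s \<ge> 0" and Fc: "continuous_on {0..s} F" and gc: "continuous_on {0..s} g"
    and b: "\<And>\<sigma>. \<sigma> \<in> {0..s} \<Longrightarrow> \<bar>F \<sigma>\<bar> \<le> g \<sigma>"
  shows "\<bar>exp (-al i * s) * integral {0..s} (\<lambda>\<sigma>. exp (al i * \<sigma>) * F \<sigma>)\<bar> \<le> integral {0..s} g"
proof -
  have "exp (-al i * s) * integral {0..s} (\<lambda>\<sigma>. exp (al i * \<sigma>) * F \<sigma>) =
      integral {0..s} (\<lambda>\<sigma>. (exp (-al i * s) * exp (al i * \<sigma>)) * F \<sigma>)"
    by (simp add: integral_mult_right mult.assoc)
  also have "\<bar>\<dots>\<bar> \<le> integral {0..s} g"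
  proof (rule int_abs_le)
    show "continuous_on {0..s} (\<lambda>\<sigma>. (exp (-al i * s) * exp (al i * \<sigma>)) * F \<sigma>)"
      by (intro continuous_intros Fc)
    show "continuous_on {0..s} g" by fact
    fix \<sigma> assume \<sigma>: "\<sigma> \<in> {0..s}"
    have A: "\<bar>exp (-al i * s) * exp (al i * \<sigma>)\<bar> \<le> 1" using exp_le1[of \<sigma> s i] \<sigma> by simp
    have "\<bar>(exp (-al i * s) * exp (al i * \<sigma>)) * F \<sigma>\<bar> = \<bar>exp (-al i * s) * exp (al i * \<sigma>)\<bar> * \<bar>F \<sigma>\<bar>"
      by (simp add: abs_mult)
    also have "\<dots> \<le> 1 * g \<sigma>"
      by (rule mult_mono[OF A b[OF \<sigma>]]) auto
    finally show "\<bar>(exp (-al i * s) * exp (al i * \<sigma>)) * F \<sigma>\<bar> \<le> g \<sigma>" by simp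
  qed
  finally show ?thesis .
qed

definition Lz :: "real^'n \<Rightarrow> real^'n \<Rightarrow> 'n \<Rightarrow> real \<Rightarrow> real" where
  "Lz x y i s = (\<Sum>j\<in>UNIV. Y x i j s * (y $ j - x $ j))"

definition z :: "real^'n \<Rightarrow> real^'n \<Rightarrow> 'n \<Rightarrow> real \<Rightarrow> real" where
  "z x y i s = \<Phi> s y $ i - \<Phi> s x $ i - Lz x y i s"

lemma Lz_cont: "continuous_on {0..T} (Lz x y i)"
  unfolding Lz_def[abs_def] by (intro continuous_intros Y_cont)

lemma z_cont: "continuous_on {0..T} (z x y i)"
  unfolding z_def[abs_def] by (intro continuous_intros Lz_cont Phi_c_cont)

lemma Lz_eq:
  assumes s: "s \<ge> 0"
  shows "Lz x y i s = exp (-al i * s) * ((y $ i - x $ i) +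
            integral {0..s} (\<lambda>\<sigma>. exp (al i * \<sigma>) * cf x i \<sigma> * Lz x y (pr i) \<sigma>))"
proof -
  let ?h = "\<lambda>j. y $ j - x $ j"
  let ?f = "\<lambda>j \<sigma>. exp (al i * \<sigma>) * cf x i \<sigma> * Y x (pr i) j \<sigma>"
  have fc: "continuous_on {0..s} (?f j)" for j by (intro continuous_intros cf_cont Y_cont)
  have "Lz x y i s = (\<Sum>j\<in>UNIV. (exp (-al i * s) * ((if i = j then 1 else 0) + integral {0..s} (?f j))) * ?h j)"
    unfolding Lz_def by (simp only: Y_eq[OF s, of x i])
  also have "\<dots> = exp (-al i * s) * ((\<Sum>j\<in>UNIV. (if i = j then ?h j else 0)) + (\<Sum>j\<in>UNIV. integral {0..s} (?f j) * ?h j))"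
  proof -
    have pt: "(exp (-al i * s) * ((if i = j then 1 else 0) + integral {0..s} (?f j))) * ?h j =
        exp (-al i * s) * (if i = j then ?h j else 0) + exp (-al i * s) * (integral {0..s} (?f j) * ?h j)" for j
      by (simp add: algebra_simps)
    show ?thesis
      unfolding pt sum.distrib sum_distrib_left[symmetric] by (simp add: distrib_left)
  qed
  also have "(\<Sum>j\<in>UNIV. (if i = j then ?h j else 0)) = ?h i" by simp
  also have "(\<Sum>j\<in>UNIV. integral {0..s} (?f j) * ?h j) = (\<Sum>j\<in>UNIV. integral {0..s} (\<lambda>\<sigma>. ?f j \<sigma> * ?h j))"
    by (simp add: integral_mult_left)
  also have "\<dots> = integral {0..s} (\<lambda>\<sigma>. \<Sum>j\<in>UNIV. ?f j \<sigma> * ?h j)"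
    by (rule integral_sum[symmetric]) (auto intro!: integrable_continuous_real continuous_intros fc)
  also have "(\<lambda>\<sigma>. \<Sum>j\<in>UNIV. ?f j \<sigma> * ?h j) = (\<lambda>\<sigma>. exp (al i * \<sigma>) * cf x i \<sigma> * Lz x y (pr i) \<sigma>)"
    by (simp add: Lz_def sum_distrib_left mult.assoc)
  finally show ?thesis .
qed

lemma z_eq:
  assumes s: "s \<ge> 0"
  shows "z x y i s = exp (-al i * s) * integral {0..s} (\<lambda>\<sigma>. exp (al i * \<sigma>) *
      ((G i (\<Phi> \<sigma> y) - G i (\<Phi> \<sigma> x) - cf x i \<sigma> * (\<Phi> \<sigma> y $ pr i - \<Phi> \<sigma> x $ pr i))
        + cf x i \<sigma> * z x y (pr i) \<sigma>))"
proof -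
  let ?g = "\<lambda>\<sigma>. exp (al i * \<sigma>) * (G i (\<Phi> \<sigma> y) - G i (\<Phi> \<sigma> x))"
  let ?l = "\<lambda>\<sigma>. exp (al i * \<sigma>) * cf x i \<sigma> * Lz x y (pr i) \<sigma>"
  have gc: "continuous_on {0..s} ?g" by (intro continuous_intros G_cont)
  have lc: "continuous_on {0..s} ?l" by (intro continuous_intros cf_cont Lz_cont)
  have "z x y i s = exp (-al i * s) * (integral {0..s} ?g - integral {0..s} ?l)"
    unfolding z_def diff_voc[OF s, of y i x] Lz_eq[OF s, of x y i] by (simp add: algebra_simps)
  also have "integral {0..s} ?g - integral {0..s} ?l = integral {0..s} (\<lambda>\<sigma>. ?g \<sigma> - ?l \<sigma>)"
    by (rule integral_diff[symmetric]) (rule integrable_continuous_real, fact)+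
  also have "(\<lambda>\<sigma>. ?g \<sigma> - ?l \<sigma>) = (\<lambda>\<sigma>. exp (al i * \<sigma>) *
      ((G i (\<Phi> \<sigma> y) - G i (\<Phi> \<sigma> x) - cf x i \<sigma> * (\<Phi> \<sigma> y $ pr i - \<Phi> \<sigma> x $ pr i))
        + cf x i \<sigma> * z x y (pr i) \<sigma>))"
    by (simp add: z_def fun_eq_iff algebra_simps)
  finally show ?thesis .
qed


lemma Phi_bounded: "\<exists>B. \<forall>\<sigma>\<in>{0..t}. \<forall>j. \<bar>\<Phi> \<sigma> x $ j\<bar> \<le> B"
proof -
  have "continuous_on {0..t} (\<lambda>\<sigma>. \<Phi> \<sigma> x)"
    by (intro continuous_at_imp_continuous_on ballI Phi_isCont)
  then have "bounded ((\<lambda>\<sigma>. \<Phi> \<sigma> x) ` {0..t})"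
    by (intro compact_imp_bounded compact_continuous_image) auto
  then obtain B where "\<forall>v\<in>(\<lambda>\<sigma>. \<Phi> \<sigma> x) ` {0..t}. norm v \<le> B" unfolding bounded_iff by blast
  then have "\<forall>\<sigma>\<in>{0..t}. \<forall>j. \<bar>\<Phi> \<sigma> x $ j\<bar> \<le> B"
    using component_le_norm_cart order_trans by fastforce
  then show ?thesis by blast
qed

lemma has_deriv:
  assumes t: "t \<ge> 0"
  shows "(\<Phi> t has_derivative ((*v) (\<chi> i j. Y x i j t))) (at x)"
  unfolding has_derivative_within_alt
proof (intro conjI allI impI)
  show "bounded_linear ((*v) (\<chi> i j. Y x i j t))" by (rule matrix_vector_mul_bounded_linear)
  fix \<epsilon> :: real assume \<epsilon>: "\<epsilon> > 0"
  define R where "R = real CARD('n)"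
  have R: "R > 0" unfolding R_def by simp
  define K where "K = exp (R * m * t)"
  have K: "K > 0" unfolding K_def by simp
  obtain B where B: "\<And>\<sigma> j. \<sigma> \<in> {0..t} \<Longrightarrow> \<bar>\<Phi> \<sigma> x $ j\<bar> \<le> B" using Phi_bounded[of t x] by blast
  define \<eta> where "\<eta> = \<epsilon> / (R * R * K * K * (t + 1))"
  have \<eta>: "\<eta> > 0" unfolding \<eta>_def using \<epsilon> R K t by simp
  obtain \<delta> where \<delta>: "\<delta> > 0" and hu: "\<And>a b. \<bar>a\<bar> \<le> B \<Longrightarrow> \<bar>b - a\<bar> < \<delta> \<Longrightarrow>
      \<bar>hill m b - hill m a - hd m a * (b - a)\<bar> \<le> \<eta> * \<bar>b - a\<bar>"
    using hill_unif[OF m1 \<eta>, of B] by blast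
  define d where "d = \<delta> / (R * K)"
  have d: "d > 0" unfolding d_def using \<delta> R K by simp
  show "\<exists>d>0. \<forall>y\<in>UNIV. norm (y - x) < d \<longrightarrow>
      norm (\<Phi> t y - \<Phi> t x - (\<chi> i j. Y x i j t) *v (y - x)) \<le> \<epsilon> * norm (y - x)"
  proof (intro exI[of _ d] conjI d ballI impI)
    fix y assume yd: "norm (y - x) < d"
    define n where "n = norm (y - x)"
    have n0: "n \<ge> 0" unfolding n_def by simp
    have h1: "(\<Sum>i\<in>UNIV. \<bar>y $ i - x $ i\<bar>) \<le> R * n"
    proof -
      have "(\<Sum>i\<in>UNIV. \<bar>y $ i - x $ i\<bar>) \<le> (\<Sum>i\<in>(UNIV::'n set). n)"
        using component_le_norm_cart[of "y - x"] by (intro sum_mono) (simp add: n_def)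
      then show ?thesis by (simp add: R_def)
    qed
    have Pb: "\<bar>\<Phi> \<sigma> y $ j - \<Phi> \<sigma> x $ j\<bar> \<le> R * K * n" if \<sigma>: "\<sigma> \<in> {0..t}" for \<sigma> j
    proof -
      have "\<bar>\<Phi> \<sigma> y $ j - \<Phi> \<sigma> x $ j\<bar> \<le> (\<Sum>i\<in>UNIV. \<bar>\<Phi> \<sigma> y $ i - \<Phi> \<sigma> x $ i\<bar>)"
        by (rule member_le_sum) auto
      also have "\<dots> \<le> (\<Sum>i\<in>UNIV. \<bar>y $ i - x $ i\<bar>) * exp (CARD('n) * m * \<sigma>)"
        using \<sigma> by (intro lip) auto
      also have "\<dots> \<le> (R * n) * K"
      proof (rule mult_mono[OF h1])
        show "exp (real CARD('n) * m * \<sigma>) \<le> K"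
          unfolding K_def R_def using \<sigma> m1 by (auto intro!: mult_left_mono)
      qed (use R n0 in auto)
      finally show ?thesis by (simp add: mult_ac)
    qed
    have RKn: "R * K * n < \<delta>"
      using yd R K unfolding d_def n_def by (simp add: field_simps)
    define c0 where "c0 = \<eta> * (R * K * n)"
    define W where "W \<sigma> = (\<Sum>i\<in>UNIV. \<bar>z x y i \<sigma>\<bar>)" for \<sigma>
    have Wc: "continuous_on {0..T} W" for T unfolding W_def by (intro continuous_intros z_cont)
    have zi: "\<bar>z x y i s\<bar> \<le> integral {0..s} (\<lambda>\<sigma>. c0 + m * W \<sigma>)" if s: "s \<in> {0..t}" for s i
    proof -
      let ?F = "\<lambda>\<sigma>. (G i (\<Phi> \<sigma> y) - G i (\<Phi> \<sigma> x) - cf x i \<sigma> * (\<Phi> \<sigma> y $ pr i - \<Phi> \<sigma> x $ pr i))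
        + cf x i \<sigma> * z x y (pr i) \<sigma>"
      have "\<bar>z x y i s\<bar> = \<bar>exp (-al i * s) * integral {0..s} (\<lambda>\<sigma>. exp (al i * \<sigma>) * ?F \<sigma>)\<bar>"
        using z_eq[of s x y i] s by simp
      also have "\<dots> \<le> integral {0..s} (\<lambda>\<sigma>. c0 + m * W \<sigma>)"
      proof (rule kern_bound)
        show "0 \<le> s" using s by simp
        show "continuous_on {0..s} ?F" by (intro continuous_intros G_cont cf_cont Phi_c_cont z_cont)
        show "continuous_on {0..s} (\<lambda>\<sigma>. c0 + m * W \<sigma>)" by (intro continuous_intros Wc)
        fix \<sigma> assume \<sigma>s: "\<sigma> \<in> {0..s}"
        then have \<sigma>: "\<sigma> \<in> {0..t}" using s by auto
        have A: "\<bar>G i (\<Phi> \<sigma> y) - G i (\<Phi> \<sigma> x) - cf x i \<sigma> * (\<Phi> \<sigma> y $ pr i - \<Phi> \<sigma> x $ pr i)\<bar> \<le> c0"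
        proof (cases "idx i = 0")
          case True
          let ?a = "\<Phi> \<sigma> x $ pr i" and ?b = "\<Phi> \<sigma> y $ pr i"
          have "\<bar>hill m ?b - hill m ?a - hd m ?a * (?b - ?a)\<bar> \<le> \<eta> * \<bar>?b - ?a\<bar>"
            by (rule hu) (use B[OF \<sigma>] Pb[OF \<sigma>] RKn in \<open>auto intro: le_less_trans\<close>)
          also have "\<dots> \<le> c0" unfolding c0_def using Pb[OF \<sigma>] \<eta> by (intro mult_left_mono) auto
          finally show ?thesis using True by (simp add: G_def cf_def)
        next
          case False
          then show ?thesis using \<eta> R K n0 by (simp add: G_def cf_def c0_def)
        qed
        have C: "\<bar>cf x i \<sigma> * z x y (pr i) \<sigma>\<bar> \<le> m * W \<sigma>"
        proof -
          have "\<bar>cf x i \<sigma> * z x y (pr i) \<sigma>\<bar> = cf x i \<sigma> * \<bar>z x y (pr i) \<sigma>\<bar>"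
            using cf_nonneg by (simp add: abs_mult)
          also have "\<dots> \<le> m * W \<sigma>"
          proof (rule mult_mono)
            show "cf x i \<sigma> \<le> m" by (rule cf_le)
            show "\<bar>z x y (pr i) \<sigma>\<bar> \<le> W \<sigma>" unfolding W_def by (rule member_le_sum) auto
          qed (use m1 in auto)
          finally show ?thesis .
        qed
        show "\<bar>?F \<sigma>\<bar> \<le> c0 + m * W \<sigma>"
          using A C abs_triangle_ineq order_trans add_mono by fastforce
      qed
      finally show ?thesis .
    qed
    have Wle: "W s \<le> R * c0 * t + (R * m) * integral {0..s} W" if s: "s \<in> {0..t}" for s
    proof -
      have "W s = (\<Sum>i\<in>UNIV. \<bar>z x y i s\<bar>)" by (rule W_def)
      also have "\<dots> \<le> (\<Sum>i\<in>(UNIV::'n set). integral {0..s} (\<lambda>\<sigma>. c0 + m * W \<sigma>))"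
        by (intro sum_mono zi s)
      also have "\<dots> = R * integral {0..s} (\<lambda>\<sigma>. c0 + m * W \<sigma>)" by (simp add: R_def)
      also have "integral {0..s} (\<lambda>\<sigma>. c0 + m * W \<sigma>) = c0 * s + m * integral {0..s} W"
      proof -
        have "integral {0..s} (\<lambda>\<sigma>. c0 + m * W \<sigma>) = integral {0..s} (\<lambda>\<sigma>. c0) + integral {0..s} (\<lambda>\<sigma>. m * W \<sigma>)"
          by (rule integral_add) (auto intro!: integrable_continuous_real continuous_intros Wc)
        then show ?thesis using s by (simp add: integral_mult_right mult.commute)
      qed
      also have "R * (c0 * s + m * integral {0..s} W) \<le> R * c0 * t + (R * m) * integral {0..s} W"
      proof -
        have "c0 * s \<le> c0 * t" using s \<eta> R K n0 unfolding c0_def by (intro mult_left_mono) auto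
        then show ?thesis using R by (simp add: algebra_simps)
      qed
      finally show ?thesis .
    qed
    have Wt: "W t \<le> (R * c0 * t) * exp ((R * m) * t)"
      by (rule gronwall[OF Wc Wle]) (use R m1 t in auto)
    have "norm (\<Phi> t y - \<Phi> t x - (\<chi> i j. Y x i j t) *v (y - x)) \<le>
        (\<Sum>i\<in>UNIV. \<bar>(\<Phi> t y - \<Phi> t x - (\<chi> i j. Y x i j t) *v (y - x)) $ i\<bar>)"
      by (rule norm_le_l1_cart)
    also have "\<dots> = W t"
      unfolding W_def z_def Lz_def by (simp add: matrix_vector_mult_def)
    also have "\<dots> \<le> (R * c0 * t) * K" using Wt by (simp add: K_def mult.assoc)
    also have "\<dots> = \<epsilon> * n * (t / (t + 1))"
    proof -
      have t1: "t + 1 \<noteq> 0" using t by simp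
      have e: "\<epsilon> = \<eta> * (R * R * K * K * (t + 1))" unfolding \<eta>_def using R K t by simp
      show ?thesis unfolding c0_def e using t1 by (simp add: field_simps)
    qed
    also have "\<dots> \<le> \<epsilon> * n * 1"
      using \<epsilon> n0 t by (intro mult_left_mono) auto
    finally show "norm (\<Phi> t y - \<Phi> t x - (\<chi> i j. Y x i j t) *v (y - x)) \<le> \<epsilon> * norm (y - x)"
      by (simp add: n_def)
  qed
qed


lemma coord_zero_prop:
  assumes t: "t > 0" and z: "\<And>s. s \<in> {0<..<t} \<Longrightarrow> \<Phi> s x $ e (CARD('n) - 1) = 0"
  shows "x = 0"
proof -
  have step: "\<Phi> s x $ pr i = 0" if i0: "idx i \<noteq> 0" and zi: "\<And>s. s \<in> {0<..<t} \<Longrightarrow> \<Phi> s x $ i = 0"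
      and s: "s \<in> {0<..<t}" for i s
  proof -
    have "((\<lambda>\<sigma>. 0::real) has_real_derivative 0) (at s)" by simp
    then have "((\<lambda>\<sigma>. \<Phi> \<sigma> x $ i) has_real_derivative 0) (at s)"
      by (rule has_field_derivative_transform_within_open[of _ _ _ "{0<..<t}"]) (use s zi in auto)
    then have "G i (\<Phi> s x) - al i * \<Phi> s x $ i = 0"
      using DERIV_unique coord_deriv by blast
    then show ?thesis using i0 zi[OF s] by (simp add: G_def)
  qed
  have all: "\<Phi> s x $ e (CARD('n) - 1 - k) = 0" if "k < CARD('n)" "s \<in> {0<..<t}" for k s
    using that
  proof (induction k arbitrary: s)
    case 0 then show ?case using z by simp
  next
    case (Suc k)
    let ?i = "e (CARD('n) - 1 - k)"
    have ik: "idx ?i = CARD('n) - 1 - k" using Suc.prems by simp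
    have "idx ?i \<noteq> 0" using ik Suc.prems by simp
    then have "\<Phi> s x $ pr ?i = 0" using step Suc.IH Suc.prems by auto
    moreover have "pr ?i = e (CARD('n) - 1 - Suc k)" using ik Suc.prems by (simp add: pr_def)
    ultimately show ?case by simp
  qed
  have "x $ i = 0" for i
  proof -
    have ki: "CARD('n) - 1 - (CARD('n) - 1 - idx i) = idx i" using idx_lt[of i] by simp
    have ev: "eventually (\<lambda>s. \<Phi> s x $ i = 0) (at_right 0)"
      unfolding eventually_at_right_field
      using t all[of "CARD('n) - 1 - idx i"] ki by (intro exI[of _ t]) auto
    have "((\<lambda>s. \<Phi> s x $ i) \<longlongrightarrow> \<Phi> 0 x $ i) (at_right 0)"
      using Phi_c_isCont[where x=x and i=i and t=0] by (simp add: continuous_at filterlim_at_split)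
    moreover have "((\<lambda>s. \<Phi> s x $ i) \<longlongrightarrow> 0) (at_right 0)"
      using ev by (simp add: tendsto_eventually)
    ultimately have "\<Phi> 0 x $ i = 0" using tendsto_unique trivial_limit_at_right_real by blast
    then show ?thesis using flow0 by simp
  qed
  then show ?thesis by (simp add: vec_eq_iff)
qed

lemma nonvanish:
  assumes "x \<noteq> 0" "t > 0"
  shows "\<exists>s\<in>{0<..<t}. \<Phi> s x $ e (CARD('n) - 1) \<noteq> 0"
  using coord_zero_prop assms by blast

lemma Y_int_nonneg:
  assumes s: "s \<ge> 0"
  shows "integral {0..s} (\<lambda>\<sigma>. exp (al i * \<sigma>) * cf x i \<sigma> * Y x (pr i) j \<sigma>) \<ge> 0"
proof (rule integral_nonneg)
  show "(\<lambda>\<sigma>. exp (al i * \<sigma>) * cf x i \<sigma> * Y x (pr i) j \<sigma>) integrable_on {0..s}"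
    by (auto intro!: integrable_continuous_real continuous_intros cf_cont Y_cont)
  fix \<sigma> assume "\<sigma> \<in> {0..s}"
  then show "0 \<le> exp (al i * \<sigma>) * cf x i \<sigma> * Y x (pr i) j \<sigma>"
    using Y_nonneg[of \<sigma>] cf_nonneg by auto
qed

lemma Y_ge_int:
  assumes s: "s \<ge> 0"
  shows "Y x i j s \<ge> exp (-al i * s) * integral {0..s} (\<lambda>\<sigma>. exp (al i * \<sigma>) * cf x i \<sigma> * Y x (pr i) j \<sigma>)"
  using Y_eq[OF s, where x=x and i=i and j=j] Y_int_nonneg[OF s, where i=i and x=x and j=j] by simp

lemma Y_diag_pos: "s > 0 \<Longrightarrow> Y x j j s > 0"
  using Y_eq[where s=s and x=x and i=j and j=j] Y_int_nonneg[where s=s and i=j and x=x and j=j] by (simp add: add_pos_nonneg)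

lemma pr_mod:
  assumes "j0 < CARD('n)"
  shows "pr (e (Suc n mod CARD('n))) = e (n mod CARD('n))"
proof -
  have c: "CARD('n) > 0" by simp
  have "Suc n mod CARD('n) < CARD('n)" by simp
  then have ii: "idx (e (Suc n mod CARD('n))) = Suc n mod CARD('n)" by simp
  show ?thesis
  proof (cases "Suc (n mod CARD('n)) = CARD('n)")
    case True
    then have "Suc n mod CARD('n) = 0" by (simp add: mod_Suc)
    moreover have "n mod CARD('n) = CARD('n) - 1" using True by simp
    ultimately show ?thesis using ii by (simp add: pr_def)
  next
    case False
    then have "Suc n mod CARD('n) = Suc (n mod CARD('n))" by (simp add: mod_Suc)
    then show ?thesis using ii by (simp add: pr_def)
  qed
qed

lemma Y_chain_pos:
  assumes x: "x \<noteq> 0" and j0: "j0 < CARD('n)"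
  shows "d < CARD('n) \<Longrightarrow> t > 0 \<Longrightarrow> Y x (e ((j0 + d) mod CARD('n))) (e j0) t > 0"
proof (induction d arbitrary: t)
  case 0
  then show ?case using Y_diag_pos j0 by simp
next
  case (Suc d)
  let ?i = "e ((j0 + Suc d) mod CARD('n))"
  have pri: "pr ?i = e ((j0 + d) mod CARD('n))"
    using pr_mod[OF j0, of "j0 + d"] by simp
  let ?f = "\<lambda>\<sigma>. exp (al ?i * \<sigma>) * cf x ?i \<sigma> * Y x (pr ?i) (e j0) \<sigma>"
  have fc: "continuous_on {0..t} ?f" by (intro continuous_intros cf_cont Y_cont)
  have fnn: "?f \<sigma> \<ge> 0" if "\<sigma> \<in> {0..t}" for \<sigma>
    using that Y_nonneg[of \<sigma>] cf_nonneg by auto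
  have "\<exists>s0\<in>{0<..t}. ?f s0 > 0"
  proof (cases "idx ?i = 0")
    case True
    then have pe: "pr ?i = e (CARD('n) - 1)" by (simp add: pr_def)
    obtain s0 where s0: "s0 \<in> {0<..<t}" "\<Phi> s0 x $ e (CARD('n) - 1) \<noteq> 0"
      using nonvanish[OF x Suc.prems(2)] by blast
    have "cf x ?i s0 > 0" using True pe s0 hd_pos[OF m1] by (simp add: cf_def)
    moreover have "Y x (pr ?i) (e j0) s0 > 0" using Suc.IH[of s0] Suc.prems s0 pri by simp
    ultimately show ?thesis using s0 by (intro bexI[of _ s0]) auto
  next
    case False
    have "Y x (pr ?i) (e j0) t > 0" using Suc.IH[of t] Suc.prems pri by simp
    then show ?thesis using False Suc.prems by (intro bexI[of _ t]) (auto simp: cf_def)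
  qed
  then obtain s0 where "s0 \<in> {0<..t}" "?f s0 > 0" by blast
  then have "integral {0..t} ?f > 0"
    by (intro int_pos[OF fc fnn]) (use Suc.prems in auto)
  then have "exp (-al ?i * t) * integral {0..t} ?f > 0" by simp
  then show ?case using Y_ge_int[where s=t and x=x and i="?i" and j="e j0"] Suc.prems by simp
qed

lemma Y_pos:
  assumes "x \<noteq> 0" "t > 0"
  shows "Y x i j t > 0"
proof -
  define j0 where "j0 = idx j"
  define d where "d = (idx i + CARD('n) - j0) mod CARD('n)"
  have j0: "j0 < CARD('n)" unfolding j0_def by (rule idx_lt)
  have "(j0 + d) mod CARD('n) = (j0 + (idx i + CARD('n) - j0)) mod CARD('n)"
    unfolding d_def by (simp add: mod_add_right_eq)
  also have "j0 + (idx i + CARD('n) - j0) = idx i + CARD('n)" using j0 by simp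
  also have "(idx i + CARD('n)) mod CARD('n) = idx i" using idx_lt[of i] by simp
  finally have "e ((j0 + d) mod CARD('n)) = i" by simp
  moreover have "d < CARD('n)" unfolding d_def by simp
  ultimately show ?thesis
    using Y_chain_pos[OF assms(1) j0, of d t] assms(2) by (simp add: j0_def)
qed


lemma strong_mono:
  assumes xy: "vlt x y" and t: "t > 0"
  shows "vll (\<Phi> t x) (\<Phi> t y)"
  unfolding vll_def
proof
  fix i
  define h where "h = y - x"
  have hnn: "h $ j \<ge> 0" for j using xy unfolding vlt_def vle_def h_def by simp
  have hne: "h \<noteq> 0" using xy unfolding vlt_def h_def by auto
  then obtain j1 where j1: "h $ j1 > 0" using hnn by (metis less_eq_real_def vec_eq_iff zero_index)
  define p where "p s = x + s *\<^sub>R h" for s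
  define g where "g s = \<Phi> t (p s) $ i" for s
  define g' where "g' s = ((\<chi> a b. Y (p s) a b t) *v h) $ i" for s
  have d: "(g has_real_derivative g' s) (at s)" for s
  proof -
    have pd: "(p has_derivative (\<lambda>u. u *\<^sub>R h)) (at s)"
      unfolding p_def by (auto intro!: derivative_eq_intros)
    have "((\<lambda>s. \<Phi> t (p s)) has_derivative ((*v) (\<chi> a b. Y (p s) a b t)) \<circ> (\<lambda>u. u *\<^sub>R h)) (at s)"
      using diff_chain_at[OF pd has_deriv[of t "p s"]] t by (simp add: o_def)
    moreover have "((*v) (\<chi> a b. Y (p s) a b t)) \<circ> (\<lambda>u. u *\<^sub>R h) = (\<lambda>u. u *\<^sub>R ((\<chi> a b. Y (p s) a b t) *v h))"
      by (simp add: fun_eq_iff o_def matrix_vector_mult_scaleR)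
    ultimately have "((\<lambda>s. \<Phi> t (p s)) has_vector_derivative ((\<chi> a b. Y (p s) a b t) *v h)) (at s)"
      by (simp add: has_vector_derivative_def)
    from bounded_linear.has_vector_derivative[OF bounded_linear_vec_nth[of i] this]
    show ?thesis
      by (simp add: has_real_derivative_iff_has_vector_derivative g_def[abs_def] g'_def)
  qed
  have g'eq: "g' s = (\<Sum>j\<in>UNIV. Y (p s) i j t * h $ j)" for s
    by (simp add: g'_def matrix_vector_mult_def)
  have nn: "g' s \<ge> 0" for s
    unfolding g'eq using Y_nonneg[of t] hnn t by (intro sum_nonneg mult_nonneg_nonneg) auto
  define s0 where "s0 = (SOME s. p s = 0)"
  have pos: "g' s > 0" if "s \<noteq> s0" for s
  proof -
    have ps: "p s \<noteq> 0"
    proof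
      assume ps0: "p s = 0"
      then have "p s0 = 0" unfolding s0_def by (rule someI)
      moreover have "(s - s0) *\<^sub>R h = p s - p s0" unfolding p_def by (simp add: algebra_simps)
      ultimately have "(s - s0) *\<^sub>R h = 0" using ps0 by simp
      then show False using that hne by simp
    qed
    show ?thesis unfolding g'eq
      by (rule sum_pos2[of UNIV j1]) (use Y_pos[OF ps t] j1 Y_nonneg[of t] hnn t in \<open>auto intro: mult_nonneg_nonneg\<close>)
  qed
  have "g 0 < g 1" by (rule mono_strict_aux[OF d nn pos])
  then show "\<Phi> t x $ i < \<Phi> t y $ i" by (simp add: g_def p_def h_def)
qed

end

theorem mainTheorem9:
  fixes m :: real and \<alpha> :: "nat \<Rightarrow> real" and e :: "nat \<Rightarrow> 'n::finite"
    and \<Phi> :: "real \<Rightarrow> real^'n \<Rightarrow> real^'n"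
  assumes r2: "CARD('n) \<ge> 2"
    and e_bij: "bij_betw e {..<CARD('n)} UNIV"
    and alpha_pos: "\<And>k. k < CARD('n) \<Longrightarrow> \<alpha> k > 0"
    and m1: "m > 1"
    and flow0: "\<And>x. \<Phi> 0 x = x"
    and flow_ode: "\<And>x t. ((\<lambda>s. \<Phi> s x) has_vector_derivative cyc_field m \<alpha> e (\<Phi> t x)) (at t)"
  shows "(\<forall>x t. x \<noteq> 0 \<longrightarrow> t > 0 \<longrightarrow>
            (\<exists>D. (\<Phi> t has_derivative D) (at x) \<and> (\<forall>i j. matrix D $ i $ j > 0)))
       \<and> (\<forall>x y t. vlt x y \<longrightarrow> t > 0 \<longrightarrow> vll (\<Phi> t x) (\<Phi> t y))"
  proof -
  interpret cyc m \<alpha> e \<Phi>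
    by unfold_locales (use assms in auto)
  show ?thesis
  proof (intro conjI allI impI)
    fix x :: "real^'n" and t :: real
    assume x: "x \<noteq> 0" and t: "t > 0"
    show "\<exists>D. (\<Phi> t has_derivative D) (at x) \<and> (\<forall>i j. matrix D $ i $ j > 0)"
      using has_deriv[of t x] Y_pos[OF x t] t
      by (intro exI[of _ "(*v) (\<chi> i j. Y x i j t)"]) (simp add: matrix_of_matrix_vector_mul)
  next
    fix x y :: "real^'n" and t :: real
    assume "vlt x y" "t > 0"
    then show "vll (\<Phi> t x) (\<Phi> t y)" by (rule strong_mono)
  qed
qed

end
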